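(* Let $\Gamma$ be a trivalent graph. The semigroup $BZ_\Gamma(SL_2(\mathbb{C}))$ is generated by those weightings $w:E(\Gamma)\to\mathbb{Z}_{\ge0}$ in it with $w(e)\le2$ for all $e\in E(\Gamma)$.
   Context: $BZ_\Gamma(SL_2(\mathbb{C}))$ is the additive semigroup of weightings $w:E(\Gamma)\to\mathbb{Z}_{\ge0}$ such that at every vertex $v$, with incident edges $e,f,g$ (counted with multiplicity), one has $|w(e)-w(f)|\le w(g)\le w(e)+w(f)$ and $w(e)+w(f)+w(g)\in2\mathbb{Z}$. *)

theory Defs
  imports Main "HOL-Library.Multiset"
begin

text \<open>A (multi)graph with vertex set V, edge set E and an endpoint map:
  each edge has a 2-element multiset of endpoints (loops allowed, multiple edges allowed).\<close>

definition graph :: "'v set \<Rightarrow> 'e set \<Rightarrow> ('e \<Rightarrow> 'v multiset) \<Rightarrow> bool" where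
  "graph V E ends \<longleftrightarrow> finite V \<and> finite E \<and>
     (\<forall>e\<in>E. size (ends e) = 2 \<and> set_mset (ends e) \<subseteq> V)"

text \<open>Multiset of edges incident to v, counted with multiplicity (a loop counts twice).\<close>
definition incident :: "'e set \<Rightarrow> ('e \<Rightarrow> 'v multiset) \<Rightarrow> 'v \<Rightarrow> 'e multiset" where
  "incident E ends v = (\<Sum>e\<in>E. replicate_mset (count (ends e) v) e)"

definition trivalent :: "'v set \<Rightarrow> 'e set \<Rightarrow> ('e \<Rightarrow> 'v multiset) \<Rightarrow> bool" where
  "trivalent V E ends \<longleftrightarrow> graph V E ends \<and> (\<forall>v\<in>V. size (incident E ends v) = 3)"

definition BZ :: "'v set \<Rightarrow> 'e set \<Rightarrow> ('e \<Rightarrow> 'v multiset) \<Rightarrow> ('e \<Rightarrow> nat) set" where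
  "BZ V E ends = {w. (\<forall>e. e \<notin> E \<longrightarrow> w e = 0) \<and>
     (\<forall>v\<in>V. \<forall>e f g. incident E ends v = {#e, f, g#} \<longrightarrow>
        (int (w g) \<ge> \<bar>int (w e) - int (w f)\<bar> \<and> w g \<le> w e + w f \<and> even (w e + w f + w g)))}"

text \<open>Additive subsemigroup (with 0, the empty sum) of weightings generated by a set S.\<close>
definition gen_semigroup :: "('e \<Rightarrow> nat) set \<Rightarrow> ('e \<Rightarrow> nat) set" where
  "gen_semigroup S = {w. \<exists>ws. set ws \<subseteq> S \<and> w = (\<lambda>e. \<Sum>u\<leftarrow>ws. u e)}"

end

theory Submission
  imports Defs
begin

lemma sum_mset_count:
  "sum_mset (image_mset g M) = (\<Sum>z\<in>set_mset M. of_nat (count M z) * (g z :: 'b::comm_semiring_1))"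
proof (induction M)
  case empty then show ?case by simp
next
  case (add x M)
  show ?case
  proof (cases "x \<in># M")
    case True
    have "(\<Sum>z\<in>set_mset (add_mset x M). of_nat (count (add_mset x M) z) * g z)
        = (\<Sum>z\<in>set_mset M. of_nat (count M z) * g z + (if z = x then g z else 0))"
      using True by (intro sum.cong) (auto simp: algebra_simps insert_absorb)
    also have "\<dots> = (\<Sum>z\<in>set_mset M. of_nat (count M z) * g z) + g x"
      using True by (simp add: sum.distrib)
    finally show ?thesis using add by (simp add: add.commute)
  next
    case False
    have "(\<Sum>z\<in>set_mset (add_mset x M). of_nat (count (add_mset x M) z) * g z)
        = g x + (\<Sum>z\<in>set_mset M. of_nat (count (add_mset x M) z) * g z)"
      using False by (simp add: not_in_iff)
    also have "(\<Sum>z\<in>set_mset M. of_nat (count (add_mset x M) z) * g z) = (\<Sum>z\<in>set_mset M. of_nat (count M z) * g z)"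
      using False by (intro sum.cong) auto
    finally show ?thesis using add by simp
  qed
qed

definition oth :: "('e \<Rightarrow> 'v multiset) \<Rightarrow> 'e \<Rightarrow> 'v \<Rightarrow> 'v" where
  "oth ends e v = (THE u. ends e = {#v, u#})"

lemma oth:
  assumes "size (ends e) = 2" "v \<in># ends e"
  shows "ends e = {#v, oth ends e v#}"
proof -
  obtain N where N: "ends e = add_mset v N" using assms(2) multi_member_split by metis
  then have "size N = 1" using assms(1) by simp
  then obtain u where "N = {#u#}" using size_1_singleton_mset by metis
  with N have eq: "ends e = {#v, u#}" by simp
  have "(THE u. ends e = {#v, u#}) = u"
    by (rule the_equality) (use eq in auto)
  then show ?thesis using eq by (simp add: oth_def)
qed

lemma count_incident:
  assumes "finite E"
  shows "count (incident E ends v) x = (if x \<in> E then count (ends x) v else 0)"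
  unfolding incident_def count_sum using assms
  by (simp add: count_replicate_mset sum.delta' split: if_splits)
    
lemma size3: "size (M::'a multiset) = 3 \<Longrightarrow> \<exists>a b c. M = {#a, b, c#}"
proof -
  assume h: "size M = 3"
  have "size M = Suc 2" using h by simp
  from size_eq_Suc_imp_eq_union[OF this] obtain a N where aN1: "M = add_mset a N" by blast
  have aN: "M = add_mset a N" "size N = 2" using aN1 h by auto
  have "size N = Suc 1" using aN(2) by simp
  from size_eq_Suc_imp_eq_union[OF this] obtain b K where bK1: "N = add_mset b K" by blast
  have bK: "N = add_mset b K" "size K = 1" using bK1 aN by auto
  from size_1_singleton_mset[OF bK(2)] obtain c where "K = {#c#}" by blast
  with aN bK show ?thesis by blast
qed

definition Sw :: "('e \<Rightarrow> nat) \<Rightarrow> 'e multiset \<Rightarrow> nat" where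
  "Sw w N = sum_mset (image_mset w N)"

lemma BZ_char:
  assumes tri: "trivalent V E ends"
  shows "w \<in> BZ V E ends \<longleftrightarrow> (\<forall>e. e \<notin> E \<longrightarrow> w e = 0) \<and>
     (\<forall>v\<in>V. even (Sw w (incident E ends v)) \<and> (\<forall>z\<in>#incident E ends v. 2 * w z \<le> Sw w (incident E ends v)))"
proof -
  have loc: "(\<forall>e f g. incident E ends v = {#e, f, g#} \<longrightarrow>
        (int (w g) \<ge> \<bar>int (w e) - int (w f)\<bar> \<and> w g \<le> w e + w f \<and> even (w e + w f + w g)))
     \<longleftrightarrow> even (Sw w (incident E ends v)) \<and> (\<forall>z\<in>#incident E ends v. 2 * w z \<le> Sw w (incident E ends v))"
    if "v \<in> V" for v
  proof -
    from tri that have "size (incident E ends v) = 3" by (simp add: trivalent_def)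
    then obtain a b c where abc: "incident E ends v = {#a, b, c#}" using size3 by metis
    show ?thesis
    proof
      assume H: "\<forall>e f g. incident E ends v = {#e, f, g#} \<longrightarrow>
        (int (w g) \<ge> \<bar>int (w e) - int (w f)\<bar> \<and> w g \<le> w e + w f \<and> even (w e + w f + w g))"
      from H[rule_format, OF abc] show "even (Sw w (incident E ends v)) \<and> (\<forall>z\<in>#incident E ends v. 2 * w z \<le> Sw w (incident E ends v))"
        unfolding abc Sw_def by (auto simp: add.commute add.left_commute)
    next
      assume H: "even (Sw w (incident E ends v)) \<and> (\<forall>z\<in>#incident E ends v. 2 * w z \<le> Sw w (incident E ends v))"
      show "\<forall>e f g. incident E ends v = {#e, f, g#} \<longrightarrow>
        (int (w g) \<ge> \<bar>int (w e) - int (w f)\<bar> \<and> w g \<le> w e + w f \<and> even (w e + w f + w g))"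
      proof (intro allI impI)
        fix e f g assume efg: "incident E ends v = {#e, f, g#}"
        with H have "even (w e + w f + w g)" "2 * w e \<le> w e + w f + w g" "2 * w f \<le> w e + w f + w g" "2 * w g \<le> w e + w f + w g"
          by (auto simp: Sw_def add.commute add.left_commute)
        then show "int (w g) \<ge> \<bar>int (w e) - int (w f)\<bar> \<and> w g \<le> w e + w f \<and> even (w e + w f + w g)"
          by auto
      qed
    qed
  qed
  show ?thesis unfolding BZ_def using loc by auto
qed


lemma arith_core:
  fixes N :: "'e multiset" and w L :: "'e \<Rightarrow> nat"
  assumes eN: "e \<in># N" and sz: "size N = 3" and ev: "even (Sw w N)"
    and tri: "\<forall>z\<in>#N. 2 * w z \<le> Sw w N"
    and bud: "\<forall>z\<in>#N. 2 * L z \<le> count N z * (Sw w N - 2 * w z)"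
  shows "count N e * (\<Sum>z\<in>set_mset N. L z) \<le> L e + count N e * w e"
    and "count N e * (\<Sum>z\<in>set_mset N. L z) < L e + count N e * w e \<Longrightarrow>
          \<exists>z\<in>#N. e \<in># N - {#z#} \<and> 2 * (L z + 1) \<le> count N z * (Sw w N - 2 * w z)"
proof -
  define S where "S = int (Sw w N)"
  define c where "c z = int (count N z)" for z
  define D where "D z = c z * (S - 2 * int (w z))" for z
  define Z where "Z = set_mset N"
  have finZ: "finite Z" by (simp add: Z_def)
  have eZ: "e \<in> Z" using eN by (simp add: Z_def)
  have cpos: "c z \<ge> 1" if "z \<in> Z" for z using that by (simp add: c_def Z_def)
  have Dnat: "int (count N z * (Sw w N - 2 * w z)) = D z" if "z \<in> Z" for z
    using tri that by (simp add: D_def c_def S_def Z_def of_nat_diff)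
  have bud': "2 * int (L z) \<le> D z" if "z \<in> Z" for z
    using bud that Dnat[OF that] by (simp add: Z_def) (metis of_nat_le_iff of_nat_mult of_nat_numeral)
  have SN: "S = (\<Sum>z\<in>Z. c z * int (w z))"
    using sum_mset_count[of "\<lambda>z. int (w z)" N] by (simp add: S_def Sw_def c_def Z_def multiset.map_comp comp_def)
  have cN: "(\<Sum>z\<in>Z. c z) = 3"
    using sum_mset_count[of "\<lambda>z. (1::int)" N] sz by (simp add: c_def Z_def)
  have sumD: "(\<Sum>z\<in>Z. D z) = S"
  proof -
    have "(\<Sum>z\<in>Z. D z) = (\<Sum>z\<in>Z. c z) * S - 2 * (\<Sum>z\<in>Z. c z * int (w z))"
      by (simp add: D_def algebra_simps sum_distrib_left sum_distrib_right sum_subtractf)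
    then show ?thesis using cN SN by simp
  qed
  define d where "d z = D z - 2 * int (L z)" for z
  have dpos: "d z \<ge> 0" if "z \<in> Z" for z using bud'[OF that] by (simp add: d_def)
  have key: "2 * (int (L e) + c e * int (w e)) - 2 * c e * (\<Sum>z\<in>Z. int (L z))
      = (c e - 1) * d e + c e * (\<Sum>z\<in>Z - {e}. d z)"
  proof -
    have "2 * c e * int (w e) = c e * S - D e" by (simp add: D_def algebra_simps)
    also have "\<dots> = c e * (\<Sum>z\<in>Z. D z) - D e" using sumD by simp
    finally have 1: "2 * c e * int (w e) = c e * (\<Sum>z\<in>Z. D z) - D e" .
    have 2: "(\<Sum>z\<in>Z. D z) = 2 * (\<Sum>z\<in>Z. int (L z)) + (\<Sum>z\<in>Z. d z)"
      by (simp add: d_def sum.distrib[symmetric] sum_distrib_left)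
    have 3: "(\<Sum>z\<in>Z. d z) = d e + (\<Sum>z\<in>Z - {e}. d z)"
      using finZ eZ by (simp add: sum.remove)
    have "D e = d e + 2 * int (L e)" by (simp add: d_def)
    then show ?thesis using 1 2 3 by (simp add: algebra_simps)
  qed
  have nonneg: "(c e - 1) * d e + c e * (\<Sum>z\<in>Z - {e}. d z) \<ge> 0"
    using cpos[OF eZ] dpos[OF eZ] dpos by (intro add_nonneg_nonneg mult_nonneg_nonneg sum_nonneg) auto
  have "2 * c e * (\<Sum>z\<in>Z. int (L z)) \<le> 2 * (int (L e) + c e * int (w e))"
    using key nonneg by linarith
  then have "int (count N e * (\<Sum>z\<in>set_mset N. L z)) \<le> int (L e + count N e * w e)"
    by (simp add: c_def Z_def)
  then show "count N e * (\<Sum>z\<in>set_mset N. L z) \<le> L e + count N e * w e" by linarith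
  assume strict: "count N e * (\<Sum>z\<in>set_mset N. L z) < L e + count N e * w e"
  show "\<exists>z\<in>#N. e \<in># N - {#z#} \<and> 2 * (L z + 1) \<le> count N z * (Sw w N - 2 * w z)"
  proof (rule ccontr)
    assume no: "\<not> ?thesis"
    have Deven: "even (D z)" for z using ev by (simp add: D_def S_def)
    have dz0: "d z = 0" if "z \<in> Z" "e \<in># N - {#z#}" for z
    proof -
      have "\<not> 2 * (L z + 1) \<le> count N z * (Sw w N - 2 * w z)" using no that by (auto simp: Z_def)
      then have "\<not> 2 * int (L z) + 2 \<le> D z" using Dnat[OF that(1)]
        by (metis (mono_tags, opaque_lifting) distrib_left_numeral mult.right_neutral of_nat_add of_nat_le_iff of_nat_mult of_nat_numeral semiring_norm(3) one_add_one)
      moreover have "even (d z)" using Deven[of z] by (simp add: d_def)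
      ultimately show ?thesis using dpos[OF that(1)] by (simp add: d_def) presburger
    qed
    have rest: "(\<Sum>z\<in>Z - {e}. d z) = 0"
    proof (rule sum.neutral, rule ballI)
      fix z assume "z \<in> Z - {e}"
      then have "z \<in> Z" "z \<noteq> e" by auto
      then have "e \<in># N - {#z#}" using eN by (simp add: in_diff_count)
      then show "d z = 0" using dz0 \<open>z \<in> Z\<close> by blast
    qed
    have z: "(c e - 1) * d e = 0"
    proof (cases "c e = 1")
      case False
      then have "count N e \<ge> 2" using cpos[OF eZ] unfolding c_def by linarith
      then have "e \<in># N - {#e#}" by (simp add: in_diff_count)
      then show ?thesis using dz0 eZ by simp
    qed simp
    have "2 * (int (L e) + c e * int (w e)) - 2 * c e * (\<Sum>z\<in>Z. int (L z)) = 0"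
      unfolding key z rest by simp
    then have "2 * c e * (\<Sum>z\<in>Z. int (L z)) = 2 * (int (L e) + c e * int (w e))"
      by linarith
    then have "int (count N e * (\<Sum>z\<in>set_mset N. L z)) = int (L e + count N e * w e)"
      by (simp add: c_def Z_def)
    then show False using strict by linarith
  qed
qed

definition cnt :: "('a \<Rightarrow> bool) \<Rightarrow> 'a multiset \<Rightarrow> nat" where
  "cnt P A = size (filter_mset P A)"

lemma cnt_empty[simp]: "cnt P {#} = 0" by (simp add: cnt_def)
lemma cnt_add[simp]: "cnt P (add_mset a A) = (if P a then 1 else 0) + cnt P A" by (simp add: cnt_def)
lemma cnt_mono: "A \<subseteq># B \<Longrightarrow> cnt P A \<le> cnt P B"
  unfolding cnt_def by (intro size_mset_mono multiset_filter_mono)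
lemma cnt_fst: "cnt (\<lambda>a. f a = s) A = count (image_mset f A) s"
  by (induction A) auto

lemma pair_eq: "{#a, b#} = {#c, d#} \<longleftrightarrow> (a = c \<and> b = d) \<or> (a = d \<and> b = c)"
  by (auto simp: add_eq_conv_diff)

locale TG =
  fixes V :: "'v set" and E :: "'e set" and ends :: "'e \<Rightarrow> 'v multiset" and w :: "'e \<Rightarrow> nat"
  assumes tri: "trivalent V E ends" and wBZ: "w \<in> BZ V E ends"
begin

abbreviation "M v \<equiv> incident E ends v"

lemma finE: "finite E" and finV: "finite V"
  and ends2: "e \<in> E \<Longrightarrow> size (ends e) = 2" and endsV: "e \<in> E \<Longrightarrow> set_mset (ends e) \<subseteq> V"
  and M3: "v \<in> V \<Longrightarrow> size (M v) = 3"
  using tri by (auto simp: trivalent_def graph_def)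

lemma countM: "count (M v) x = (if x \<in> E then count (ends x) v else 0)"
  using count_incident[OF finE] .

lemma memM: "x \<in># M v \<longleftrightarrow> x \<in> E \<and> v \<in># ends x"
  by (simp add: countM flip: count_greater_zero_iff)

lemma wE: "e \<notin> E \<Longrightarrow> w e = 0"
  and wev: "v \<in> V \<Longrightarrow> even (Sw w (M v))"
  and wtri: "v \<in> V \<Longrightarrow> z \<in># M v \<Longrightarrow> 2 * w z \<le> Sw w (M v)"
proof -
  have c: "(\<forall>e. e \<notin> E \<longrightarrow> w e = 0) \<and>
     (\<forall>v\<in>V. even (Sw w (M v)) \<and> (\<forall>z\<in>#M v. 2 * w z \<le> Sw w (M v)))"
    using BZ_char[OF tri, of w] wBZ by blast
  show "e \<notin> E \<Longrightarrow> w e = 0" using c by blast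
  show "v \<in> V \<Longrightarrow> even (Sw w (M v))" using c by blast
  show "v \<in> V \<Longrightarrow> z \<in># M v \<Longrightarrow> 2 * w z \<le> Sw w (M v)" using c by blast
qed

abbreviation "ot e v \<equiv> oth ends e v"

lemma oth_ends: "e \<in> E \<Longrightarrow> v \<in># ends e \<Longrightarrow> ends e = {#v, ot e v#}"
proof -
  assume "e \<in> E" "v \<in># ends e"
  then show ?thesis using oth[of ends e v] ends2 by blast
qed

lemma oth_oth: "e \<in> E \<Longrightarrow> v \<in># ends e \<Longrightarrow> ot e (ot e v) = v"
proof -
  assume a: "e \<in> E" "v \<in># ends e"
  then have 1: "ends e = {#v, ot e v#}" by (rule oth_ends)
  then have "ot e v \<in># ends e" by simp
  then have "ends e = {#ot e v, ot e (ot e v)#}" using oth_ends a(1) by blast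
  with 1 show ?thesis by (auto simp: pair_eq)
qed

lemma count_ends: "e \<in> E \<Longrightarrow> v \<in># ends e \<Longrightarrow> count (ends e) v = (if ot e v = v then 2 else 1)"
proof -
  assume "e \<in> E" "v \<in># ends e"
  then have "ends e = {#v, ot e v#}" by (rule oth_ends)
  then show ?thesis by simp
qed

definition valid :: "('e \<times> 'v) \<times> ('e \<times> 'v) \<Rightarrow> bool" where
  "valid a \<longleftrightarrow> snd (fst a) \<in> V \<and> ends (fst (snd a)) = {#snd (fst a), snd (snd a)#}
     \<and> {#fst (fst a), fst (snd a)#} \<subseteq># M (snd (fst a))"

definition cL where
  "cL A v z = cnt (\<lambda>a. snd (fst a) = v \<and> add_mset z {#fst (fst a), fst (snd a)#} = M v) A"
definition nA where
  "nA A v = cnt (\<lambda>a. snd (fst a) = v) A"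
definition slot where
  "slot A x v = sum_mset (image_mset (\<lambda>a. if snd (fst a) = v then count {#fst (fst a), fst (snd a)#} x else 0) A)"
definition budget where
  "budget A \<longleftrightarrow> (\<forall>v\<in>V. \<forall>z\<in>#M v. 2 * cL A v z \<le> count (M v) z * (Sw w (M v) - 2 * w z))"

lemma valid_snd: "valid a \<Longrightarrow> fst (snd a) \<in> E \<and> snd (snd a) \<in># ends (fst (snd a)) \<and> snd (snd a) \<in> V"
proof -
  assume v: "valid a"
  then have sub: "{#fst (fst a), fst (snd a)#} \<subseteq># M (snd (fst a))" by (simp add: valid_def)
  have "fst (snd a) \<in># {#fst (fst a), fst (snd a)#}" by simp
  then have "fst (snd a) \<in># M (snd (fst a))" by (rule mset_subset_eqD[OF sub])
  then have e: "fst (snd a) \<in> E" by (simp add: memM)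
  moreover have "snd (snd a) \<in># ends (fst (snd a))" using v by (simp add: valid_def)
  ultimately show ?thesis using endsV by blast
qed

lemma turn_split:
  assumes "valid a"
  shows "\<exists>z. M (snd (fst a)) = add_mset z {#fst (fst a), fst (snd a)#}"
proof -
  let ?P = "{#fst (fst a), fst (snd a)#}" and ?v = "snd (fst a)"
  have sub: "?P \<subseteq># M ?v" and vV: "?v \<in> V" using assms by (auto simp: valid_def)
  have "size (M ?v - ?P) = size (M ?v) - size ?P" using sub by (rule size_Diff_submset)
  then have "size (M ?v - ?P) = 1" using M3[OF vV] by simp
  then obtain z where z: "M ?v - ?P = {#z#}" using size_1_singleton_mset by blast
  have "M ?v = ?P + (M ?v - ?P)" using sub by (rule subset_mset.add_diff_inverse[symmetric])
  then have "M ?v = ?P + {#z#}" using z by simp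
  then show ?thesis by simp
qed

lemma slot_cL:
  assumes "\<forall>a\<in>#A. valid a" "x \<in># M v"
  shows "slot A x v + cL A v x = count (M v) x * nA A v"
  using assms(1)
proof (induction A)
  case empty then show ?case by (simp add: slot_def cL_def nA_def)
next
  case (add a A)
  then have IH: "slot A x v + cL A v x = count (M v) x * nA A v" and va: "valid a" by auto
  obtain z where z: "M (snd (fst a)) = add_mset z {#fst (fst a), fst (snd a)#}"
    using turn_split[OF va] by blast
  have "(if snd (fst a) = v then count {#fst (fst a), fst (snd a)#} x else 0)
      + (if snd (fst a) = v \<and> add_mset x {#fst (fst a), fst (snd a)#} = M v then 1 else 0)
      = count (M v) x * (if snd (fst a) = v then 1 else 0)"
  proof (cases "snd (fst a) = v")
    case True
    then show ?thesis using z by (auto simp del: add_mset_eq_single)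
  qed simp
  then show ?case using IH by (simp add: slot_def cL_def nA_def algebra_simps)
qed

lemma nA_sum:
  assumes "\<forall>a\<in>#A. valid a" "v \<in> V"
  shows "nA A v = (\<Sum>z\<in>set_mset (M v). cL A v z)"
  using assms(1)
proof (induction A)
  case empty then show ?case by (simp add: cL_def nA_def)
next
  case (add a A)
  then have IH: "nA A v = (\<Sum>z\<in>set_mset (M v). cL A v z)" and va: "valid a" by auto
  obtain z where z: "M (snd (fst a)) = add_mset z {#fst (fst a), fst (snd a)#}"
    using turn_split[OF va] by blast
  have "(\<Sum>y\<in>set_mset (M v). (if snd (fst a) = v \<and> add_mset y {#fst (fst a), fst (snd a)#} = M v then 1 else 0::nat))
      = (if snd (fst a) = v then 1 else 0)"
  proof (cases "snd (fst a) = v")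
    case True
    have "(\<Sum>y\<in>set_mset (M v). (if snd (fst a) = v \<and> add_mset y {#fst (fst a), fst (snd a)#} = M v then 1 else 0::nat))
       = (\<Sum>y\<in>set_mset (M v). (if y = z then 1 else 0))"
      using True z by (intro sum.cong) auto
    also have "\<dots> = 1" using True z by (simp add: sum.delta)
    finally show ?thesis using True by simp
  qed simp
  then show ?case using IH by (simp add: cL_def nA_def sum.distrib)
qed

lemma slot_states:
  assumes "\<forall>a\<in>#A. valid a" "x \<in> E" "v \<in># ends x"
  shows "slot A x v = cnt (\<lambda>a. fst a = (x, v)) A + cnt (\<lambda>a. snd a = (x, ot x v)) A"
  using assms(1)
proof (induction A)
  case empty then show ?case by (simp add: slot_def)
next
  case (add a A)
  then have IH: "slot A x v = cnt (\<lambda>a. fst a = (x, v)) A + cnt (\<lambda>a. snd a = (x, ot x v)) A"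
    and va: "valid a" by auto
  have ox: "ends x = {#v, ot x v#}" using oth_ends assms by blast
  have "(if snd (fst a) = v then count {#fst (fst a), fst (snd a)#} x else 0)
     = (if fst a = (x, v) then 1 else 0) + (if snd a = (x, ot x v) then 1 else 0)"
  proof (cases "snd (fst a) = v")
    case True
    have "fst (snd a) = x \<longleftrightarrow> snd a = (x, ot x v)"
    proof
      assume h: "fst (snd a) = x"
      then have "{#v, snd (snd a)#} = {#v, ot x v#}" using va True ox by (simp add: valid_def)
      then show "snd a = (x, ot x v)" using h by (cases "snd a") auto
    qed auto
    then show ?thesis using True by (cases a) auto
  next
    case False
    have "snd a \<noteq> (x, ot x v)"
    proof
      assume h: "snd a = (x, ot x v)"
      then have "{#snd (fst a), ot x v#} = {#v, ot x v#}" using va ox by (simp add: valid_def)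
      then show False using False by (auto simp: pair_eq)
    qed
    then show ?thesis using False by (cases a) auto
  qed
  then show ?case using IH by (simp add: slot_def)
qed


definition arcsL :: "('e \<times> 'v) list \<Rightarrow> (('e \<times> 'v) \<times> ('e \<times> 'v)) list" where
  "arcsL xs = zip xs (tl xs)"

lemma arcsL_fst: "map fst (arcsL xs) = butlast xs"
  by (simp add: arcsL_def map_fst_zip_take butlast_conv_take)
lemma arcsL_snd: "map snd (arcsL xs) = tl xs"
  by (simp add: arcsL_def map_snd_zip_take)

lemma cnt_list: "cnt (\<lambda>a. f a = s) (mset as) = count (mset (map f as)) s"
  by (simp add: cnt_fst)

lemma slot_le_cap:
  assumes val: "\<forall>a\<in>#A. valid a" and bud: "budget A" and yV: "y \<in> V" and xM: "x \<in># M y"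
  shows "slot A x y \<le> count (M y) x * w x"
proof -
  have b: "\<forall>z\<in>#M y. 2 * cL A y z \<le> count (M y) z * (Sw w (M y) - 2 * w z)"
    using bud yV by (simp add: budget_def)
  have "count (M y) x * (\<Sum>z\<in>set_mset (M y). cL A y z) \<le> cL A y x + count (M y) x * w x"
    using arith_core(1)[OF xM M3[OF yV] wev[OF yV] _ b] wtri[OF yV] by blast
  moreover have "slot A x y + cL A y x = count (M y) x * (\<Sum>z\<in>set_mset (M y). cL A y z)"
    using slot_cL[OF val xM] nA_sum[OF val yV] by simp
  ultimately show ?thesis by linarith
qed

lemma not_stuck:
  assumes dist: "distinct xs" and ne: "xs \<noteq> []" and val: "\<forall>a\<in>set (arcsL xs). valid a"
    and bud: "budget (mset (arcsL xs))" and lst: "last xs = (e, v)" and eE: "e \<in> E"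
    and ve: "v \<in># ends e" and start: "length xs = 1 \<Longrightarrow> w e > 0"
  shows "\<exists>z\<in>#M v. e \<in># M v - {#z#} \<and>
      2 * (cL (mset (arcsL xs)) v z + 1) \<le> count (M v) z * (Sw w (M v) - 2 * w z)"
proof -
  define A where "A = mset (arcsL xs)"
  have valA: "\<forall>a\<in>#A. valid a" using val by (simp add: A_def)
  have vV: "v \<in> V" using endsV eE ve by blast
  have eM: "e \<in># M v" using eE ve by (simp add: memM)
  define ov where "ov = ot e v"
  have endse: "ends e = {#v, ov#}" using oth_ends[OF eE ve] by (simp add: ov_def)
  have ovin: "ov \<in># ends e" using endse by simp
  have ovV: "ov \<in> V" using endsV eE ovin by blast
  have eMo: "e \<in># M ov" using eE ovin by (simp add: memM)
  have ooo: "ot e ov = v" using oth_oth[OF eE ve] by (simp add: ov_def)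
  have cv: "count (M v) e = (if ov = v then 2 else 1)" using endse eE by (simp add: countM)
  have co: "count (M ov) e = (if ov = v then 2 else 1)" using endse eE by (auto simp: countM)
  have dbl: "distinct (butlast xs)" "distinct (tl xs)" using dist by (auto intro: distinct_butlast distinct_tl)
  have outc: "cnt (\<lambda>a. fst a = s) A = (if s \<in> set (butlast xs) then 1 else 0)" for s
  proof -
    have "count (mset (butlast xs)) s = (if s \<in> set (butlast xs) then 1 else 0)"
      using dbl(1) distinct_count_atmost_1 by metis
    then show ?thesis unfolding A_def cnt_list arcsL_fst .
  qed
  have inc: "cnt (\<lambda>a. snd a = s) A = (if s \<in> set (tl xs) then 1 else 0)" for s
  proof -
    have "count (mset (tl xs)) s = (if s \<in> set (tl xs) then 1 else 0)"
      using dbl(2) distinct_count_atmost_1 by metis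
    then show ?thesis unfolding A_def cnt_list arcsL_snd .
  qed
  have xs_split: "xs = butlast xs @ [last xs]" using ne by simp
  have lastnot: "last xs \<notin> set (butlast xs)"
    using dist xs_split by (metis distinct_append not_distinct_conv_prefix)
  have setxs: "set xs = set (butlast xs) \<union> {last xs}" using xs_split by (metis set_append empty_set list.simps(15) Un_empty_right)
  have slv: "slot A e v = (if (e, ov) \<in> set (tl xs) then 1 else 0)"
    using slot_states[OF valA eE ve] outc inc lastnot lst by (simp add: ov_def)
  have slo: "slot A e ov = (if (e, ov) \<in> set (butlast xs) then 1 else 0) + (if (e, v) \<in> set (tl xs) then 1 else 0)"
    using slot_states[OF valA eE ovin] outc inc ooo by simp
  have capo: "slot A e ov \<le> count (M ov) e * w e"
    using slot_le_cap[OF valA _ ovV eMo] bud by (simp add: A_def)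
  have capv: "slot A e v \<le> count (M v) e * w e"
    using slot_le_cap[OF valA _ vV eM] bud by (simp add: A_def)
  have lastin: "last xs \<in> set (tl xs)" if "length xs \<noteq> 1"
  proof -
    have "tl xs \<noteq> []" using that ne by (cases xs) auto
    then have "last (tl xs) \<in> set (tl xs)" by simp
    moreover have "last (tl xs) = last xs" using \<open>tl xs \<noteq> []\<close> by (cases xs) auto
    ultimately show ?thesis by simp
  qed
  have strict: "slot A e v < count (M v) e * w e"
  proof (cases "(e, ov) \<in> set (tl xs)")
    case False
    have "w e > 0"
    proof (cases "length xs = 1")
      case True then show ?thesis using start by simp
    next
      case F: False
      then have "(e, v) \<in> set (tl xs)" using lastin lst by simp
      then have "slot A e ov \<ge> 1" using slo by simp
      then show ?thesis using capo by (cases "w e = 0") auto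
    qed
    then show ?thesis using False slv cv by simp
  next
    case True
    then have ln: "length xs \<noteq> 1" by (cases xs) auto
    then have evin: "(e, v) \<in> set (tl xs)" using lastin lst by simp
    show ?thesis
    proof (cases "ov = v")
      case True
      then have "w e \<ge> 1" using capv slv \<open>(e, ov) \<in> set (tl xs)\<close> cv by (cases "w e = 0") auto
      then show ?thesis using slv True cv \<open>(e, ov) \<in> set (tl xs)\<close> by simp
    next
      case False
      have "(e, ov) \<in> set xs" using \<open>(e, ov) \<in> set (tl xs)\<close> by (cases xs) auto
      then have "(e, ov) \<in> set (butlast xs)" using setxs lst False by auto
      then have "slot A e ov = 2" using slo evin by simp
      then have "w e \<ge> 2" using capo co False by simp
      then show ?thesis using slv cv False \<open>(e, ov) \<in> set (tl xs)\<close> by simp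
    qed
  qed
  have b: "\<forall>z\<in>#M v. 2 * cL A v z \<le> count (M v) z * (Sw w (M v) - 2 * w z)"
    using bud vV by (simp add: budget_def A_def)
  have "slot A e v + cL A v e = count (M v) e * (\<Sum>z\<in>set_mset (M v). cL A v z)"
    using slot_cL[OF valA eM] nA_sum[OF valA vV] by simp
  then have "count (M v) e * (\<Sum>z\<in>set_mset (M v). cL A v z) < cL A v e + count (M v) e * w e"
    using strict by linarith
  from arith_core(2)[OF eM M3[OF vV] wev[OF vV] _ b this] wtri[OF vV]
  show ?thesis by (simp add: A_def)
qed

lemma budget_mono: "B \<subseteq># A \<Longrightarrow> budget A \<Longrightarrow> budget B"
  unfolding budget_def cL_def by (meson cnt_mono le_trans mult_le_mono2)

lemma extend:
  assumes vV: "v \<in> V" and zM: "z \<in># M v" and eMz: "e \<in># M v - {#z#}"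
    and slack: "2 * (cL A v z + 1) \<le> count (M v) z * (Sw w (M v) - 2 * w z)"
    and bud: "budget A"
  shows "\<exists>e'. valid ((e, v), (e', ot e' v)) \<and> budget (add_mset ((e, v), (e', ot e' v)) A)"
proof -
  have "size (M v - {#z#}) = 2" using M3[OF vV] zM by (simp add: size_Diff_singleton)
  obtain K where K: "M v - {#z#} = add_mset e K" using eMz multi_member_split by metis
  then have "size K = 1" using \<open>size (M v - {#z#}) = 2\<close> by simp
  then obtain e' where "K = {#e'#}" using size_1_singleton_mset by blast
  with K have P: "M v - {#z#} = {#e, e'#}" by simp
  have Mv: "M v = add_mset z {#e, e'#}" using P zM by (metis insert_DiffM)
  have e'M: "e' \<in># M v" using Mv by simp
  then have e'E: "e' \<in> E" and ve': "v \<in># ends e'" by (auto simp: memM)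
  have val: "valid ((e, v), (e', ot e' v))"
    unfolding valid_def using vV oth_ends[OF e'E ve'] Mv by simp
  have "budget (add_mset ((e, v), (e', ot e' v)) A)"
    unfolding budget_def
  proof (intro ballI)
    fix y z' assume yV: "y \<in> V" and z'M: "z' \<in># M y"
    show "2 * cL (add_mset ((e, v), e', ot e' v) A) y z' \<le> count (M y) z' * (Sw w (M y) - 2 * w z')"
    proof (cases "v = y \<and> add_mset z' {#e, e'#} = M y")
      case True
      then have "z' = z" using Mv by simp
      then show ?thesis using True slack by (simp add: cL_def)
    next
      case False
      then have "cL (add_mset ((e, v), e', ot e' v) A) y z' = cL A y z'" by (simp add: cL_def)
      then show ?thesis using bud yV z'M by (simp add: budget_def)
    qed
  qed
  with val show ?thesis by blast
qed


lemma arcsL_snoc: "xs \<noteq> [] \<Longrightarrow> arcsL (xs @ [y]) = arcsL xs @ [(last xs, y)]"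
  unfolding arcsL_def by (induction xs rule: induct_list012) auto

lemma path_states:
  assumes "hd xs = s0" "s0 \<in> E \<times> V" "\<forall>a\<in>set (arcsL xs). valid a"
  shows "set xs \<subseteq> E \<times> V"
proof
  fix s assume s: "s \<in> set xs"
  show "s \<in> E \<times> V"
  proof (cases xs)
    case Nil then show ?thesis using s by simp
  next
    case (Cons x ys)
    show ?thesis
    proof (cases "s = x")
      case True then show ?thesis using assms Cons by simp
    next
      case False
      then have "s \<in> set (tl xs)" using s Cons by simp
      then have "s \<in> set (map snd (arcsL xs))" by (simp add: arcsL_snd)
      then obtain a where a: "a \<in> set (arcsL xs)" "s = snd a" by auto
      then have "valid a" using assms(3) by blast
      from valid_snd[OF this] a(2) show ?thesis by (cases "snd a") auto
    qed
  qed
qed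

lemma exists_cycle:
  assumes e0E: "e0 \<in> E" and we0: "w e0 > 0" and v0e: "v0 \<in># ends e0"
  shows "\<exists>C. C \<noteq> {#} \<and> (\<forall>a\<in>#C. valid a) \<and> budget C \<and> image_mset fst C = image_mset snd C
     \<and> (\<forall>s. count (image_mset fst C) s \<le> 1)"
proof -
  define P where "P xs \<longleftrightarrow> distinct xs \<and> xs \<noteq> [] \<and> hd xs = (e0, v0) \<and>
     (\<forall>a\<in>set (arcsL xs). valid a) \<and> budget (mset (arcsL xs))" for xs
  have s0: "(e0, v0) \<in> E \<times> V" using e0E v0e endsV by blast
  have P0: "P [(e0, v0)]" by (simp add: P_def arcsL_def budget_def cL_def)
  have bnd: "\<forall>xs. P xs \<longrightarrow> length xs < card (E \<times> V) + 1"
  proof (intro allI impI)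
    fix xs assume "P xs"
    then have "set xs \<subseteq> E \<times> V" "distinct xs" using path_states[OF _ s0] by (auto simp: P_def)
    then have "card (set xs) \<le> card (E \<times> V)" using finE finV by (intro card_mono) auto
    then show "length xs < card (E \<times> V) + 1" using \<open>distinct xs\<close> distinct_card by fastforce
  qed
  obtain xs where Pxs: "P xs" and mx: "\<forall>ys. P ys \<longrightarrow> length ys \<le> length xs"
    using Lattices_Big.ex_has_greatest_nat[of P "[(e0, v0)]" length, OF P0 bnd] by blast
  have dist: "distinct xs" and ne: "xs \<noteq> []" and hdx: "hd xs = (e0, v0)"
    and val: "\<forall>a\<in>set (arcsL xs). valid a" and bud: "budget (mset (arcsL xs))"
    using Pxs by (auto simp: P_def)
  obtain e v where lst: "last xs = (e, v)" by (cases "last xs") auto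
  have ev: "e \<in> E \<and> v \<in># ends e \<and> (length xs = 1 \<longrightarrow> w e > 0)"
  proof (cases "length xs = 1")
    case True
    then obtain x where "xs = [x]" by (cases xs) auto
    then show ?thesis using hdx lst e0E v0e we0 by simp
  next
    case False
    have "tl xs \<noteq> []" using False ne by (cases xs) auto
    then have "last xs \<in> set (tl xs)" by (cases xs) auto
    then have "last xs \<in> set (map snd (arcsL xs))" by (simp add: arcsL_snd)
    then obtain a where a: "a \<in> set (arcsL xs)" "last xs = snd a" by auto
    then have "valid a" using val by blast
    from valid_snd[OF this] a(2) lst False show ?thesis by (metis fst_conv snd_conv)
  qed
  then have eE: "e \<in> E" and ve: "v \<in># ends e" and vV: "v \<in> V" using endsV by auto
  obtain z where zM: "z \<in># M v" and eMz: "e \<in># M v - {#z#}"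
    and slack: "2 * (cL (mset (arcsL xs)) v z + 1) \<le> count (M v) z * (Sw w (M v) - 2 * w z)"
    using not_stuck[OF dist ne val bud lst eE ve] ev by blast
  obtain e' where val': "valid ((e, v), (e', ot e' v))"
    and bud': "budget (add_mset ((e, v), (e', ot e' v)) (mset (arcsL xs)))"
    using extend[OF vV zM eMz slack bud] by blast
  define t where "t = (e', ot e' v)"
  have arcs': "arcsL (xs @ [t]) = arcsL xs @ [(last xs, t)]" using arcsL_snoc[OF ne] .
  have "t \<in> set xs"
  proof (rule ccontr)
    assume "t \<notin> set xs"
    have vt: "valid (last xs, t)" and bt: "budget (add_mset (last xs, t) (mset (arcsL xs)))"
      using val' bud' lst by (auto simp: t_def)
    have "P (xs @ [t])" unfolding P_def arcs'
      using dist ne hdx val vt bt \<open>t \<notin> set xs\<close> by (auto simp: hd_append)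
    then show False using mx by fastforce
  qed
  then obtain i where i: "i < length xs" "xs ! i = t" by (auto simp: in_set_conv_nth)
  define C where "C = add_mset (last xs, t) (mset (drop i (arcsL xs)))"
  have sub: "C \<subseteq># add_mset (last xs, t) (mset (arcsL xs))"
  proof -
    have "mset (drop i (arcsL xs)) \<subseteq># mset (arcsL xs)"
      by (metis append_take_drop_id mset_append mset_subset_eq_add_right)
    then show ?thesis by (simp add: C_def)
  qed
  have valC: "\<forall>a\<in>#C. valid a" using val val' lst t_def by (auto simp: C_def dest: in_set_dropD)
  have budC: "budget C" using budget_mono[OF sub] bud' lst t_def by simp
  have dxi: "drop i xs = drop i (butlast xs) @ [last xs]"
  proof -
    have "drop i xs = drop i (butlast xs @ [last xs])" using ne by simp
    also have "\<dots> = drop i (butlast xs) @ [last xs]" using i(1) by (simp add: drop_append)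
    finally show ?thesis .
  qed
  have f1: "image_mset fst (mset (drop i (arcsL xs))) = mset (drop i (butlast xs))"
    by (metis mset_map drop_map arcsL_fst)
  have s1: "image_mset snd (mset (drop i (arcsL xs))) = mset (drop i (tl xs))"
    by (metis mset_map drop_map arcsL_snd)
  have fstC: "image_mset fst C = mset (drop i xs)"
    using dxi f1 by (simp add: C_def)
  have sndC: "image_mset snd C = mset (drop i xs)"
  proof -
    have "image_mset snd C = add_mset t (mset (drop i (tl xs)))"
      using s1 by (simp add: C_def)
    also have "drop i (tl xs) = drop (Suc i) xs" by (simp add: drop_Suc)
    also have "add_mset t (mset (drop (Suc i) xs)) = mset (drop i xs)"
      using Cons_nth_drop_Suc[OF i(1)] i(2) by (metis mset.simps(2))
    finally show ?thesis .
  qed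
  have "distinct (drop i xs)" using dist by simp
  then have cnt1: "\<forall>s. count (image_mset fst C) s \<le> 1" unfolding fstC
    using distinct_count_atmost_1 by (metis order_refl zero_le_one)
  have "C \<noteq> {#}" by (simp add: C_def)
  then show ?thesis using valC budC fstC sndC cnt1 by auto
qed


lemma Sw_diff:
  assumes "\<forall>x\<in>#N. u x \<le> w x"
  shows "Sw (\<lambda>e. w e - u e) N + Sw u N = Sw w N"
  using assms by (induction N) (auto simp: Sw_def)

lemma size_filter_eq: "size (filter_mset (\<lambda>s. s = p) F) = count F p"
  by (simp add: filter_eq_replicate_mset)

lemma cycle_u:
  assumes ne: "C \<noteq> {#}" and valC: "\<forall>a\<in>#C. valid a" and budC: "budget C"
    and fs: "image_mset fst C = image_mset snd C" and c1: "\<forall>s. count (image_mset fst C) s \<le> 1"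
  defines "u \<equiv> \<lambda>x. size (filter_mset (\<lambda>s. fst s = x) (image_mset fst C))"
  shows "u \<in> BZ V E ends \<and> (\<forall>e\<in>E. u e \<le> 2) \<and> (\<exists>e\<in>E. u e > 0) \<and> (\<forall>e. u e \<le> w e)
     \<and> (\<lambda>e. w e - u e) \<in> BZ V E ends"
proof -
  define F where "F = image_mset fst C"
  have c1F: "count F s \<le> 1" for s unfolding F_def using c1 by blast
  have Fst: "fst s \<in> E \<and> snd s \<in># ends (fst s)" if "s \<in># F" for s
  proof -
    have "s \<in># image_mset snd C" using that fs by (simp add: F_def)
    then obtain a where "a \<in># C" "s = snd a" by auto
    then show ?thesis using valid_snd valC by auto
  qed
  have uF: "u x = size (filter_mset (\<lambda>s. fst s = x) F)" for x by (simp add: u_def F_def)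
  have u0: "u x = 0" if "x \<notin> E" for x
  proof -
    have "filter_mset (\<lambda>s. fst s = x) F = {#}" using Fst that by (auto simp: filter_mset_eq_mempty_iff)
    then show ?thesis by (simp add: uF)
  qed
  have uform: "u x = (if ot x v = v then count F (x, v) else count F (x, v) + count F (x, ot x v))"
    if xE: "x \<in> E" and vx: "v \<in># ends x" for x v
  proof -
    have ex: "ends x = {#v, ot x v#}" using oth_ends[OF xE vx] .
    have inpair: "snd s = v \<or> snd s = ot x v" if "s \<in># F" "fst s = x" for s
      using Fst[OF that(1)] that(2) ex by auto
    show ?thesis
    proof (cases "ot x v = v")
      case True
      have "filter_mset (\<lambda>s. fst s = x) F = filter_mset (\<lambda>s. s = (x, v)) F"
        unfolding multiset_eq_iff
      proof
        fix s show "count (filter_mset (\<lambda>s. fst s = x) F) s = count (filter_mset (\<lambda>s. s = (x, v)) F) s"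
        proof (cases "s \<in># F")
          case T: True
          then show ?thesis using inpair[of s] \<open>ot x v = v\<close> by (cases s) auto
        next
          case False
          then have "count F s = 0" by (simp add: not_in_iff)
          then show ?thesis by (cases s) auto
        qed
      qed
      then show ?thesis using True by (simp add: uF size_filter_eq)
    next
      case False
      have "filter_mset (\<lambda>s. fst s = x) F = filter_mset (\<lambda>s. s = (x, v)) F + filter_mset (\<lambda>s. s = (x, ot x v)) F"
        unfolding multiset_eq_iff
      proof
        fix s show "count (filter_mset (\<lambda>s. fst s = x) F) s = count (filter_mset (\<lambda>s. s = (x, v)) F + filter_mset (\<lambda>s. s = (x, ot x v)) F) s"
        proof (cases "s \<in># F")
          case T: True
          then show ?thesis using inpair[of s] \<open>ot x v \<noteq> v\<close> by (cases s) auto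
        next
          case F': False
          from F' have "count F s = 0" by (simp add: not_in_iff)
          then show ?thesis by (cases s) auto
        qed
      qed
      then show ?thesis using False by (simp add: uF size_filter_eq)
    qed
  qed
  have slot_u: "slot C x v = count (M v) x * u x" if vV: "v \<in> V" and xM: "x \<in># M v" for x v
  proof -
    have xE: "x \<in> E" and vx: "v \<in># ends x" using xM by (auto simp: memM)
    have "slot C x v = count F (x, v) + count F (x, ot x v)"
      using slot_states[OF valC xE vx] fs by (simp add: cnt_fst F_def)
    moreover have "count (M v) x = (if ot x v = v then 2 else 1)"
      using count_ends[OF xE vx] xE by (simp add: countM)
    ultimately show ?thesis using uform[OF xE vx] by auto
  qed
  have key: "count (M v) x * u x + cL C v x = count (M v) x * nA C v" if vV: "v \<in> V" and xM: "x \<in># M v" for x v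
    using slot_cL[OF valC xM] slot_u[OF vV xM] by simp
  have Su: "Sw u (M v) = 2 * nA C v" if vV: "v \<in> V" for v
  proof -
    have "Sw u (M v) + nA C v = (\<Sum>x\<in>set_mset (M v). count (M v) x * u x) + (\<Sum>x\<in>set_mset (M v). cL C v x)"
      using sum_mset_count[of u "M v"] nA_sum[OF valC vV] by (simp add: Sw_def)
    also have "\<dots> = (\<Sum>x\<in>set_mset (M v). count (M v) x * nA C v)"
      using key[OF vV] by (simp add: sum.distrib[symmetric])
    also have "\<dots> = 3 * nA C v"
      using sum_mset_count[of "\<lambda>_. (1::nat)" "M v"] M3[OF vV] by (simp add: sum_distrib_right[symmetric])
    finally show ?thesis by simp
  qed
  have Dz: "int (count (M v) z) * (int (Sw u (M v)) - 2 * int (u z)) = 2 * int (cL C v z)"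
    if vV: "v \<in> V" and zM: "z \<in># M v" for v z
  proof -
    have "int (count (M v) z) * int (u z) + int (cL C v z) = int (count (M v) z) * int (nA C v)"
    proof -
      have "int (count (M v) z * u z + cL C v z) = int (count (M v) z * nA C v)" using key[OF vV zM] by simp
      then show ?thesis by simp
    qed
    then show ?thesis using Su[OF vV] by (simp add: algebra_simps)
  qed
  have uz: "2 * u z \<le> Sw u (M v)" if vV: "v \<in> V" and zM: "z \<in># M v" for v z
  proof -
    have "count (M v) z > 0" using zM by simp
    have "0 \<le> int (count (M v) z) * (int (Sw u (M v)) - 2 * int (u z))"
      using Dz[OF vV zM] by simp
    then have "int (Sw u (M v)) - 2 * int (u z) \<ge> 0"
      using \<open>count (M v) z > 0\<close> by (simp add: zero_le_mult_iff)
    then show ?thesis by linarith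
  qed
  have cmp: "int (Sw u (M v)) - 2 * int (u z) \<le> int (Sw w (M v)) - 2 * int (w z)"
    if vV: "v \<in> V" and zM: "z \<in># M v" for v z
  proof -
    have b: "2 * cL C v z \<le> count (M v) z * (Sw w (M v) - 2 * w z)" using budC vV zM by (simp add: budget_def)
    have e1: "int (count (M v) z * (Sw w (M v) - 2 * w z)) = int (count (M v) z) * (int (Sw w (M v)) - 2 * int (w z))"
      using wtri[OF vV zM] by (simp add: of_nat_diff)
    have "int (2 * cL C v z) \<le> int (count (M v) z) * (int (Sw w (M v)) - 2 * int (w z))"
      unfolding e1[symmetric] using b by (simp only: of_nat_le_iff)
    then have "int (count (M v) z) * (int (Sw u (M v)) - 2 * int (u z)) \<le> int (count (M v) z) * (int (Sw w (M v)) - 2 * int (w z))"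
      using Dz[OF vV zM] by simp
    moreover have "int (count (M v) z) > 0" using zM by simp
    ultimately show ?thesis by simp
  qed
  have ule: "u x \<le> w x" for x
  proof (cases "x \<in> E")
    case False then show ?thesis using u0 by simp
  next
    case True
    have "size (ends x) = 2" using ends2 True by simp
    then have "ends x \<noteq> {#}" by auto
    then obtain v where vx: "v \<in># ends x" by (meson multiset_nonemptyE)
    have vV: "v \<in> V" using endsV True vx by blast
    have xM: "x \<in># M v" using True vx by (simp add: memM)
    obtain K where K: "M v = add_mset x K" using xM multi_member_split by metis
    then have "size K = 2" using M3[OF vV] by simp
    then have "size K = Suc 1" by simp
    from size_eq_Suc_imp_eq_union[OF this] obtain y L where yL: "K = add_mset y L" by blast
    then have "size L = 1" using \<open>size K = 2\<close> by simp
    then obtain z where "L = {#z#}" using size_1_singleton_mset by blast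
    then obtain y z where "K = {#y, z#}" using yL by blast
    with K have Mv: "M v = {#x, y, z#}" by simp
    have "int (Sw u (M v)) - 2 * int (u y) \<le> int (Sw w (M v)) - 2 * int (w y)"
      "int (Sw u (M v)) - 2 * int (u z) \<le> int (Sw w (M v)) - 2 * int (w z)"
      using cmp[OF vV] Mv by auto
    then show ?thesis using Mv by (simp add: Sw_def)
  qed
  have uBZ: "u \<in> BZ V E ends"
    unfolding BZ_char[OF tri] using u0 Su uz by auto
  have wuBZ: "(\<lambda>e. w e - u e) \<in> BZ V E ends"
    unfolding BZ_char[OF tri]
  proof (intro conjI allI impI ballI)
    fix e assume "e \<notin> E" then show "w e - u e = 0" using wE by simp
  next
    fix v assume vV: "v \<in> V"
    have sd: "Sw (\<lambda>e. w e - u e) (M v) + Sw u (M v) = Sw w (M v)" using Sw_diff ule by blast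
    have e2: "even (Sw u (M v))" using Su[OF vV] by simp
    have "even (Sw (\<lambda>e. w e - u e) (M v) + Sw u (M v))" using sd wev[OF vV] by simp
    then show "even (Sw (\<lambda>e. w e - u e) (M v))" using e2 by simp
    fix z assume zM: "z \<in># M v"
    show "2 * (w z - u z) \<le> Sw (\<lambda>e. w e - u e) (M v)" using sd cmp[OF vV zM] ule[of z] by linarith
  qed
  have u2: "u e \<le> 2" if eE: "e \<in> E" for e
  proof -
    have "size (ends e) = 2" using ends2 eE by simp
    then have "ends e \<noteq> {#}" by auto
    then obtain v where vx: "v \<in># ends e" by (meson multiset_nonemptyE)
    show ?thesis using uform[OF eE vx] c1F[of "(e, v)"] c1F[of "(e, ot e v)"] by auto
  qed
  have upos: "\<exists>e\<in>E. u e > 0"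
  proof -
    obtain a where a: "a \<in># C" using ne by (meson multiset_nonemptyE)
    have "snd a \<in># F" using a fs by (simp add: F_def)
    then have "snd a \<in># filter_mset (\<lambda>s. fst s = fst (snd a)) F" by simp
    then have "filter_mset (\<lambda>s. fst s = fst (snd a)) F \<noteq> {#}" by force
    then have "size (filter_mset (\<lambda>s. fst s = fst (snd a)) F) \<noteq> 0" by (simp only: size_eq_0_iff_empty) simp
    then have "u (fst (snd a)) > 0" unfolding uF using neq0_conv by blast
    moreover have "fst (snd a) \<in> E" using Fst \<open>snd a \<in># F\<close> by blast
    ultimately show ?thesis by blast
  qed
  show ?thesis using uBZ u2 upos ule wuBZ by blast
qed

end

lemma Sw_add: "Sw (\<lambda>e. a e + b e) N = Sw a N + Sw b N"
  by (induction N) (auto simp: Sw_def)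

lemma BZ_add:
  assumes tri: "trivalent V E ends" and a: "a \<in> BZ V E ends" and b: "b \<in> BZ V E ends"
  shows "(\<lambda>e. a e + b e) \<in> BZ V E ends"
proof -
  have A: "\<forall>e. e \<notin> E \<longrightarrow> a e = 0" "\<forall>v\<in>V. even (Sw a (incident E ends v)) \<and> (\<forall>z\<in>#incident E ends v. 2 * a z \<le> Sw a (incident E ends v))"
    using a unfolding BZ_char[OF tri] by auto
  have B: "\<forall>e. e \<notin> E \<longrightarrow> b e = 0" "\<forall>v\<in>V. even (Sw b (incident E ends v)) \<and> (\<forall>z\<in>#incident E ends v. 2 * b z \<le> Sw b (incident E ends v))"
    using b unfolding BZ_char[OF tri] by auto
  show ?thesis unfolding BZ_char[OF tri] Sw_add
  proof (intro conjI allI impI ballI)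
    fix e assume "e \<notin> E" then show "a e + b e = 0" using A B by simp
  next
    fix v assume "v \<in> V"
    then show "even (Sw a (incident E ends v) + Sw b (incident E ends v))" using A B by simp
    fix z assume "z \<in># incident E ends v"
    then have "2 * a z \<le> Sw a (incident E ends v)" "2 * b z \<le> Sw b (incident E ends v)"
      using A B \<open>v \<in> V\<close> by auto
    then show "2 * (a z + b z) \<le> Sw a (incident E ends v) + Sw b (incident E ends v)" by simp
  qed
qed

lemma BZ_zero:
  assumes tri: "trivalent V E ends"
  shows "(\<lambda>e. 0) \<in> BZ V E ends"
  unfolding BZ_char[OF tri] by (simp add: Sw_def)

lemma gen_BZ:
  assumes tri: "trivalent V E ends" and ws: "set ws \<subseteq> BZ V E ends"
  shows "(\<lambda>e. \<Sum>u\<leftarrow>ws. u e) \<in> BZ V E ends"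
  using ws
proof (induction ws)
  case Nil then show ?case using BZ_zero[OF tri] by simp
next
  case (Cons u ws)
  then have "(\<lambda>e. u e + (\<Sum>u\<leftarrow>ws. u e)) \<in> BZ V E ends"
    using BZ_add[OF tri, of u "\<lambda>e. \<Sum>u\<leftarrow>ws. u e"] by simp
  then show ?case by simp
qed

lemma decompose:
  assumes tri: "trivalent V E ends" and wBZ: "w \<in> BZ V E ends" and e0E: "e0 \<in> E" and we0: "w e0 > 0"
  shows "\<exists>u. u \<in> BZ V E ends \<and> (\<forall>e\<in>E. u e \<le> 2) \<and> (\<exists>e\<in>E. u e > 0) \<and> (\<forall>e. u e \<le> w e)
     \<and> (\<lambda>e. w e - u e) \<in> BZ V E ends"
proof -
  interpret TG V E ends w using tri wBZ by unfold_locales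
  have "ends e0 \<noteq> {#}" using ends2[OF e0E] by auto
  then obtain v0 where v0: "v0 \<in># ends e0" by (meson multiset_nonemptyE)
  obtain C where C: "C \<noteq> {#}" "\<forall>a\<in>#C. valid a" "budget C" "image_mset fst C = image_mset snd C"
    "\<forall>s. count (image_mset fst C) s \<le> 1"
    using exists_cycle[OF e0E we0 v0] by blast
  show ?thesis using cycle_u[OF C] by blast
qed

theorem mainTheorem14:
  fixes V :: "'v set" and E :: "'e set" and ends :: "'e \<Rightarrow> 'v multiset"
  assumes "trivalent V E ends"
  shows "BZ V E ends = gen_semigroup {w \<in> BZ V E ends. \<forall>e\<in>E. w e \<le> 2}"
proof
  note tri = assms
  let ?G = "{w \<in> BZ V E ends. \<forall>e\<in>E. w e \<le> 2}"
  have finE: "finite E" using tri by (simp add: trivalent_def graph_def)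
  show "gen_semigroup ?G \<subseteq> BZ V E ends"
    unfolding gen_semigroup_def using gen_BZ[OF tri] by blast
  have main: "\<forall>w. w \<in> BZ V E ends \<longrightarrow> (\<Sum>e\<in>E. w e) = n \<longrightarrow> w \<in> gen_semigroup ?G" for n
  proof (induction n rule: less_induct)
    case (less n)
    show ?case
    proof (intro allI impI)
      fix w assume wBZ: "w \<in> BZ V E ends" and wn: "(\<Sum>e\<in>E. w e) = n"
      have wout: "\<forall>e. e \<notin> E \<longrightarrow> w e = 0" using wBZ by (simp add: BZ_def)
      show "w \<in> gen_semigroup ?G"
      proof (cases "\<exists>e0\<in>E. w e0 > 0")
        case False
        then have "w = (\<lambda>e. \<Sum>u\<leftarrow>[]. u e)" using wout by (auto simp: fun_eq_iff)
        then show ?thesis unfolding gen_semigroup_def by (intro CollectI exI[of _ "[]"]) simp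
      next
        case True
        then obtain e0 where e0: "e0 \<in> E" "w e0 > 0" by blast
        obtain u where u: "u \<in> BZ V E ends" "\<forall>e\<in>E. u e \<le> 2" "\<exists>e\<in>E. u e > 0" "\<forall>e. u e \<le> w e"
          "(\<lambda>e. w e - u e) \<in> BZ V E ends"
          using decompose[OF tri wBZ e0] by blast
        define w' where "w' = (\<lambda>e. w e - u e)"
        obtain e1 where e1: "e1 \<in> E" "u e1 > 0" using u(3) by blast
        have s1: "(\<Sum>e\<in>E. w' e) + (\<Sum>e\<in>E. u e) = (\<Sum>e\<in>E. w e)"
          using u(4) by (simp add: w'_def sum.distrib[symmetric])
        have "(\<Sum>e\<in>E. u e) \<ge> u e1" by (intro member_le_sum) (auto simp: finE e1(1))
        then have lt: "(\<Sum>e\<in>E. w' e) < n" using s1 e1(2) wn by linarith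
        have "w' \<in> gen_semigroup ?G" using less.IH[OF lt] u(5) by (simp add: w'_def)
        then obtain ws where ws: "set ws \<subseteq> ?G" "w' = (\<lambda>e. \<Sum>u\<leftarrow>ws. u e)"
          unfolding gen_semigroup_def by blast
        have "w = (\<lambda>e. \<Sum>u\<leftarrow>u # ws. u e)"
        proof
          fix e
          have "w e - u e = (\<Sum>u\<leftarrow>ws. u e)" using ws(2) unfolding w'_def by metis
          then show "w e = (\<Sum>u\<leftarrow>u # ws. u e)" using u(4)[rule_format, of e] by simp
        qed
        moreover have "set (u # ws) \<subseteq> ?G" using ws(1) u(1,2) by auto
        ultimately show ?thesis unfolding gen_semigroup_def by blast
      qed
    qed
  qed
  show "BZ V E ends \<subseteq> gen_semigroup ?G" using main by blast
qed

end
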